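(* For any non-negative integer $n$, \[\sum_{\sigma\in S_n}(-1)^{p_-(\sigma)}\,C\bigl(p_-(\sigma),\lfloor n/2\rfloor-p_-(\sigma)\bigr)=2^{2\lfloor n/2\rfloor},\] and for any even positive integer $n$, \[\sum_{\sigma\in S_n}(-1)^{p_+(\sigma)}\,C\bigl(p_+(\sigma),n/2-p_+(\sigma)\bigr)=0.\]
   Context: $S_n$ is the symmetric group on $\{1,\ldots,n\}$. For $\sigma\in S_n$, with the convention $\sigma(0)=0$, let $p_+(\sigma)=\#\{i\in\{1,\ldots,n-1\}:\sigma(i-1)<\sigma(i)>\sigma(i+1)\}$ and $p_-(\sigma)=\#\{i\in\{2,\ldots,n-1\}:\sigma(i-1)<\sigma(i)>\sigma(i+1)\}$. $C(p,q)=\frac{(2p)!(2q)!}{p!(p+q)!q!}$. *)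

theory Defs
  imports Complex_Main "HOL-Combinatorics.Permutations"
begin

text \<open>Permutations of {1..n} are functions nat => nat with sigma permutes {1..n};
  such a sigma fixes 0, matching the convention sigma(0) = 0.\<close>

definition peak_plus :: "nat \<Rightarrow> (nat \<Rightarrow> nat) \<Rightarrow> nat" where
  "peak_plus n \<sigma> = card {i \<in> {1..n-1}. \<sigma> (i-1) < \<sigma> i \<and> \<sigma> i > \<sigma> (i+1)}"

definition peak_minus :: "nat \<Rightarrow> (nat \<Rightarrow> nat) \<Rightarrow> nat" where
  "peak_minus n \<sigma> = card {i \<in> {2..n-1}. \<sigma> (i-1) < \<sigma> i \<and> \<sigma> i > \<sigma> (i+1)}"

definition Ccoef :: "nat \<Rightarrow> nat \<Rightarrow> real" where
  "Ccoef p q = real (fact (2*p) * fact (2*q)) / real (fact p * fact (p+q) * fact q)"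

end

theory Submission
  imports Defs "HOL-Combinatorics.Multiset_Permutations"
begin


definition pkset :: "nat list \<Rightarrow> nat set" where
  "pkset xs = {i. 0 < i \<and> Suc i < length xs \<and> xs!(i-1) < xs!i \<and> xs!(Suc i) < xs!i}"

definition ins :: "nat \<Rightarrow> nat \<Rightarrow> nat list \<Rightarrow> nat list" where
  "ins j N zs = take j zs @ N # drop j zs"

lemma pkset_sub: "pkset xs \<subseteq> {1..<length xs - 1}"
  unfolding pkset_def by auto

lemma finite_pkset[simp]: "finite (pkset xs)"
  using pkset_sub finite_subset by blast

lemma length_ins[simp]: "j \<le> length zs \<Longrightarrow> length (ins j N zs) = Suc (length zs)"
  unfolding ins_def by simp

lemma nth_ins: "j \<le> length zs \<Longrightarrow> i \<le> length zs \<Longrightarrow>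
   ins j N zs ! i = (if i < j then zs!i else if i = j then N else zs!(i-1))"
  unfolding ins_def by (auto simp: nth_append min_def)

lemma pk_nonadj: "i \<in> pkset zs \<Longrightarrow> Suc i \<notin> pkset zs"
  unfolding pkset_def by auto

lemma pkset_ins:
  assumes j: "j \<le> length zs" and N: "\<forall>x\<in>set zs. x < N"
  shows "pkset (ins j N zs) = {i\<in>pkset zs. Suc i < j} \<union> Suc ` {i\<in>pkset zs. j < i}
          \<union> {i. i = j \<and> 0 < j \<and> j < length zs}"
proof -
  have Nl: "\<And>i. i < length zs \<Longrightarrow> zs!i < N" using N by auto
  show ?thesis
  proof (rule set_eqI, rule iffI)
    fix i assume "i \<in> pkset (ins j N zs)"
    then have i: "0 < i" "Suc i < Suc (length zs)" "ins j N zs!(i-1) < ins j N zs!i"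
       "ins j N zs!(Suc i) < ins j N zs!i" using j unfolding pkset_def by auto
    show "i \<in> {i\<in>pkset zs. Suc i < j} \<union> Suc ` {i\<in>pkset zs. j < i}
          \<union> {i. i = j \<and> 0 < j \<and> j < length zs}"
    proof (cases "Suc i < j")
      case True
      then have "i - 1 < j" "i < j" by auto
      then have "i \<in> pkset zs" using i j True by (simp add: nth_ins pkset_def)
      then show ?thesis using True by auto
    next
      case False
      show ?thesis
      proof (cases "i = j")
        case True then show ?thesis using i j by auto
      next
        case ne: False
        show ?thesis
        proof (cases "Suc i = j")
          case True
          then show ?thesis using i j Nl[of i] by (auto simp: nth_ins)
        next
          case False
          then have "j < i" using ne \<open>\<not> Suc i < j\<close> by auto
          show ?thesis
          proof (cases "i = Suc j")
            case True
            then show ?thesis using i j Nl[of j] by (auto simp: nth_ins)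
          next
            case False
            then have "Suc j < i" using \<open>j < i\<close> by auto
            then have "i - 1 \<in> pkset zs" using i j
              by (auto simp: nth_ins pkset_def split: if_splits)
            moreover have "j < i - 1" using \<open>Suc j < i\<close> by auto
            ultimately show ?thesis using \<open>0<i\<close>
              by (auto intro!: image_eqI[where x="i-1"])
          qed
        qed
      qed
    qed
  next
    fix i assume "i \<in> {i\<in>pkset zs. Suc i < j} \<union> Suc ` {i\<in>pkset zs. j < i}
          \<union> {i. i = j \<and> 0 < j \<and> j < length zs}"
    then consider "i \<in> pkset zs" "Suc i < j" | k where "i = Suc k" "k \<in> pkset zs" "j < k"
      | "i = j" "0 < j" "j < length zs" by blast
    then show "i \<in> pkset (ins j N zs)"
    proof cases
      case 1 then show ?thesis using j by (auto simp: pkset_def nth_ins)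
    next
      case 2 then show ?thesis using j by (auto simp: pkset_def nth_ins)
    next
      case 3 then show ?thesis using j Nl by (auto simp: pkset_def nth_ins)
    qed
  qed
qed

definition bad :: "nat list \<Rightarrow> nat set" where
  "bad zs = {0, length zs} \<union> pkset zs \<union> Suc ` pkset zs"

lemma card_ins:
  assumes j: "j \<le> length zs" and N: "\<forall>x\<in>set zs. x < N"
  shows "card (pkset (ins j N zs)) = card (pkset zs) + (if j \<in> bad zs then 0 else 1)"
proof -
  let ?P = "pkset zs"
  define A where "A = {i\<in>?P. Suc i < j}"
  define B where "B = {i\<in>?P. j < i}"
  define C where "C = {i\<in>?P. Suc i = j \<or> i = j}"
  define D where "D = {i. i = j \<and> 0 < j \<and> j < length zs}"
  have fA: "finite A" "finite B" "finite C" "finite D" unfolding A_def B_def C_def D_def by auto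
  have P: "?P = A \<union> B \<union> C" unfolding A_def B_def C_def by auto
  have cP: "card ?P = card A + card B + card C"
    unfolding P using fA by (subst card_Un_disjoint, auto simp: A_def B_def C_def card_Un_disjoint)+
  have I: "pkset (ins j N zs) = A \<union> Suc ` B \<union> D"
    using pkset_ins[OF j N] unfolding A_def B_def D_def by simp
  have cI: "card (pkset (ins j N zs)) = card A + card B + card D"
    unfolding I using fA
    by (subst card_Un_disjoint, auto simp: A_def B_def D_def card_Un_disjoint card_image)+
  have cC: "card C = (if j \<in> ?P \<or> j \<in> Suc ` ?P then 1 else 0)"
  proof (cases "j \<in> ?P")
    case True
    then have "C = {j}" unfolding C_def using pk_nonadj by auto
    then show ?thesis using True by simp
  next
    case False
    show ?thesis
    proof (cases "j \<in> Suc ` ?P")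
      case True
      then obtain i where "j = Suc i" "i \<in> ?P" by auto
      then have "C = {i}" unfolding C_def using False by auto
      then show ?thesis using True by simp
    next
      case F2: False
      then have "C = {}" unfolding C_def using False by auto
      then show ?thesis using False F2 by simp
    qed
  qed
  have cD: "card D = (if 0 < j \<and> j < length zs then 1 else 0)" unfolding D_def by auto
  have "length zs \<notin> ?P" "0 \<notin> ?P" "0 \<notin> Suc ` ?P" unfolding pkset_def by auto
  moreover have "length zs \<in> Suc ` ?P \<Longrightarrow> False" unfolding pkset_def by auto
  ultimately show ?thesis using cP cI cC cD j unfolding bad_def
    by (cases "j = 0"; cases "j = length zs"; auto)
qed

lemma card_bad_all:
  assumes "length zs \<ge> 1"
  shows "card ({0..length zs} \<inter> bad zs) = 2 * card (pkset zs) + 2"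
proof -
  let ?P = "pkset zs"
  have s: "{0..length zs} \<inter> bad zs = {0, length zs} \<union> ?P \<union> Suc ` ?P"
    unfolding bad_def pkset_def by auto
  have d1: "{0, length zs} \<inter> (?P \<union> Suc ` ?P) = {}" unfolding pkset_def by auto
  have d2: "?P \<inter> Suc ` ?P = {}" using pk_nonadj by auto
  have "card ({0, length zs} \<union> ?P \<union> Suc ` ?P) = card {0, length zs} + card (?P \<union> Suc ` ?P)"
    using d1 by (subst Un_assoc, intro card_Un_disjoint) auto
  also have "card (?P \<union> Suc ` ?P) = card ?P + card (Suc ` ?P)"
    using d2 by (intro card_Un_disjoint) auto
  also have "card (Suc ` ?P) = card ?P" by (simp add: card_image)
  finally have eq: "card ({0, length zs} \<union> ?P \<union> Suc ` ?P) = card {0, length zs} + (card ?P + card ?P)" .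
  have "length zs \<noteq> 0" using assms by (cases zs) auto
  then show ?thesis unfolding s eq by simp
qed

lemma card_bad_pos:
  assumes "length zs \<ge> 1"
  shows "card ({1..length zs} \<inter> bad zs) = 2 * card (pkset zs) + 1"
proof -
  let ?P = "pkset zs"
  have s: "{1..length zs} \<inter> bad zs = {length zs} \<union> ?P \<union> Suc ` ?P"
    using assms unfolding bad_def pkset_def by auto
  have d1: "{length zs} \<inter> (?P \<union> Suc ` ?P) = {}" unfolding pkset_def by auto
  have d2: "?P \<inter> Suc ` ?P = {}" using pk_nonadj by auto
  have "card ({length zs} \<union> ?P \<union> Suc ` ?P) = card {length zs} + card (?P \<union> Suc ` ?P)"
    using d1 by (subst Un_assoc, intro card_Un_disjoint) auto
  also have "card (?P \<union> Suc ` ?P) = card ?P + card (Suc ` ?P)"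
    using d2 by (intro card_Un_disjoint) auto
  also have "card (Suc ` ?P) = card ?P" by (simp add: card_image)
  finally show ?thesis unfolding s using assms by simp
qed

lemma sum_slots:
  fixes f :: "nat \<Rightarrow> real"
  assumes S: "S \<subseteq> {0..length zs}" and N: "\<forall>x\<in>set zs. x < N"
  shows "(\<Sum>j\<in>S. f (card (pkset (ins j N zs)))) =
     card (S \<inter> bad zs) * f (card (pkset zs)) + (card S - card (S \<inter> bad zs)) * f (card (pkset zs) + 1)"
proof -
  have fS: "finite S" using S finite_subset by blast
  have "(\<Sum>j\<in>S. f (card (pkset (ins j N zs)))) =
     (\<Sum>j\<in>S \<inter> bad zs. f (card (pkset (ins j N zs)))) + (\<Sum>j\<in>S - bad zs. f (card (pkset (ins j N zs))))"
    using fS by (rule sum.Int_Diff)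
  also have "(\<Sum>j\<in>S \<inter> bad zs. f (card (pkset (ins j N zs)))) = (\<Sum>j\<in>S \<inter> bad zs. f (card (pkset zs)))"
    using S card_ins[OF _ N] by (intro sum.cong) auto
  also have "(\<Sum>j\<in>S - bad zs. f (card (pkset (ins j N zs)))) = (\<Sum>j\<in>S - bad zs. f (card (pkset zs) + 1))"
    using S card_ins[OF _ N] by (intro sum.cong) auto
  also have "card (S - bad zs) = card S - card (S \<inter> bad zs)"
    using card_Int_Diff[OF fS, of "bad zs"] by simp
  ultimately show ?thesis by simp
qed



lemma Cgen: "Ccoef p q = (fact (2*p) :: real) * fact (2*q) / (fact p * fact (p+q) * fact q)"
  unfolding Ccoef_def by simp

lemma aux_alg:
  fixes A B P S Q x y z :: real
  assumes "P > 0" "S > 0" "Q > 0" "x > 0" "z > 0"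
  shows "z * ((y * A * B) / ((x * P) * (z * S) * Q)) = (y / x) * (A * B / (P * S * Q))"
  using assms by (simp add: field_simps)

lemma C1: "real (p+q+1) * Ccoef (p+1) q = 2*(2*p+1) * Ccoef p q"
proof -
  have a: "(fact (2*(p+1)) :: real) = real ((2*p+2)*(2*p+1)) * fact (2*p)"
    by (simp add: algebra_simps fact_Suc numeral_2_eq_2)
  have b: "(fact (p+1+q) :: real) = real (p+q+1) * fact (p+q)" by (simp add: fact_Suc algebra_simps)
  have c: "(fact (p+1) :: real) = real (p+1) * fact p" by (simp add: algebra_simps)
  have "real (p+q+1) * Ccoef (p+1) q = (real ((2*p+2)*(2*p+1)) / real (p+1)) * Ccoef p q"
    unfolding Cgen a b c by (rule aux_alg) auto
  also have "real ((2*p+2)*(2*p+1)) / real (p+1) = 2*(2*p+1)" by (simp add: field_simps)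
  finally show ?thesis by simp
qed

lemma Csym: "Ccoef p q = Ccoef q p"
  unfolding Ccoef_def by (simp add: ac_simps)

lemma C2: "real (p+q+1) * Ccoef p (q+1) = 2*(2*q+1) * Ccoef p q"
  using C1[of q p] by (simp add: Csym ac_simps)

lemma Codd: "(2*k+1) * Ccoef k (q+1) = (2*q+1) * Ccoef (k+1) q"
proof -
  have "real (k+q+1) * ((2*k+1) * Ccoef k (q+1)) = real (k+q+1) * ((2*q+1) * Ccoef (k+1) q)"
    using C1[of k q] C2[of k q] by (simp add: algebra_simps)
  then show ?thesis by (subst (asm) mult_cancel_left) (simp add: ac_simps)
qed

lemma Ceven: "(2*k+2) * Ccoef k (q+1) - 2*q * Ccoef (k+1) q = 4 * Ccoef k q"
proof -
  have "real (k+q+1) * ((2*k+2) * Ccoef k (q+1) - 2*q * Ccoef (k+1) q) = real (k+q+1) * (4 * Ccoef k q)"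
    using C1[of k q] C2[of k q] by (simp add: algebra_simps)
  then show ?thesis by (subst (asm) mult_cancel_left) (simp add: ac_simps)
qed



abbreviation PL :: "nat \<Rightarrow> nat list set" where
  "PL n \<equiv> permutations_of_set {1..n}"

lemma PL_length: "ys \<in> PL n \<Longrightarrow> length ys = n"
  using length_finite_permutations_of_set by fastforce

lemma set_ins: "set (ins j N ys) = insert N (set ys)"
proof -
  have "set ys = set (take j ys) \<union> set (drop j ys)" by (metis append_take_drop_id set_append)
  then show ?thesis unfolding ins_def by auto
qed

lemma distinct_ins: "distinct ys \<Longrightarrow> N \<notin> set ys \<Longrightarrow> distinct (ins j N ys)"
proof -
  assume d: "distinct ys" and N: "N \<notin> set ys"
  have "distinct (take j ys @ drop j ys)" using d by simp
  then show ?thesis unfolding ins_def distinct_append using N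
    by (auto dest: in_set_takeD in_set_dropD)
qed

lemma ins_PL: "ys \<in> PL n \<Longrightarrow> j \<le> n \<Longrightarrow> ins j (Suc n) ys \<in> PL (Suc n)"
proof -
  assume ys: "ys \<in> PL n" and j: "j \<le> n"
  have s: "set ys = {1..n}" "distinct ys" using ys by (auto dest: permutations_of_setD)
  have "set (ins j (Suc n) ys) = insert (Suc n) (set ys)" by (rule set_ins)
  moreover have "distinct (ins j (Suc n) ys)"
    using s by (intro distinct_ins) auto
  ultimately show ?thesis using s by (auto intro!: permutations_of_setI)
qed

lemma ins_inj:
  assumes "N \<notin> set ys" "N \<notin> set ys'" "j \<le> length ys" "j' \<le> length ys'"
    "length ys = length ys'" "ins j N ys = ins j' N ys'"
  shows "j = j' \<and> ys = ys'"
proof -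
  have jj: "j = j'"
  proof (rule ccontr)
    assume "j \<noteq> j'"
    then consider "j < j'" | "j' < j" by linarith
    then show False
    proof cases
      case 1
      have "ins j' N ys' ! j = ys' ! j" using 1 assms(3,4,5) by (simp add: nth_ins)
      moreover have "ins j N ys ! j = N" using assms(3) by (simp add: nth_ins)
      moreover have "ys' ! j \<in> set ys'" using 1 assms(4) by auto
      ultimately show False using assms(2,6) by auto
    next
      case 2
      have "ins j N ys ! j' = ys ! j'" using 2 assms(3,4,5) by (simp add: nth_ins)
      moreover have "ins j' N ys' ! j' = N" using assms(4) by (simp add: nth_ins)
      moreover have "ys ! j' \<in> set ys" using 2 assms(3) by auto
      ultimately show False using assms(1,6) by auto
    qed
  qed
  have "take j (ins j N ys) = take j ys" "drop (Suc j) (ins j N ys) = drop j ys"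
    using assms(3) unfolding ins_def by auto
  moreover have "take j (ins j N ys') = take j ys'" "drop (Suc j) (ins j N ys') = drop j ys'"
    using assms(4) jj unfolding ins_def by auto
  ultimately have "take j ys = take j ys'" "drop j ys = drop j ys'" using assms(6) jj by simp_all
  then have "ys = ys'" by (metis append_take_drop_id)
  then show ?thesis using jj by simp
qed

lemma PL_Suc_image: "PL (Suc n) = (\<lambda>(ys, j). ins j (Suc n) ys) ` (PL n \<times> {0..n})"
proof (rule set_eqI, rule iffI)
  fix xs assume xs: "xs \<in> PL (Suc n)"
  have s: "set xs = {1..Suc n}" "distinct xs" using xs by (auto dest: permutations_of_setD)
  have l: "length xs = Suc n" using PL_length[OF xs] .
  have "Suc n \<in> set xs" using s by auto
  then obtain j where j: "j < length xs" "xs ! j = Suc n" by (auto simp: in_set_conv_nth)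
  define ys where "ys = take j xs @ drop (Suc j) xs"
  have xs_eq: "xs = take j xs @ xs ! j # drop (Suc j) xs" by (rule id_take_nth_drop[OF j(1)])
  have dx: "distinct (take j xs @ xs ! j # drop (Suc j) xs)" using s(2) by (simp only: xs_eq[symmetric])
  have "distinct ys" using dx unfolding ys_def distinct_append by simp
  moreover have "set ys = {1..n}"
  proof -
    have "set xs = set (take j xs @ xs ! j # drop (Suc j) xs)" by (rule arg_cong[where f=set, OF xs_eq])
    also have "\<dots> = insert (xs!j) (set ys)" unfolding ys_def by simp
    finally have "set xs = insert (xs!j) (set ys)" .
    moreover have "xs!j \<notin> set ys" using dx unfolding ys_def distinct_append by auto
    ultimately have "set ys = {1..Suc n} - {Suc n}" using s(1) j(2) by auto
    then show ?thesis by (simp add: atLeastAtMostSuc_conv)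
  qed
  ultimately have ys: "ys \<in> PL n" by (auto intro!: permutations_of_setI)
  have "take j ys = take j xs" "drop j ys = drop (Suc j) xs"
    unfolding ys_def using j(1) by (simp_all add: min_def)
  then have "ins j (Suc n) ys = take j xs @ xs ! j # drop (Suc j) xs"
    unfolding ins_def using j(2) by simp
  then have "ins j (Suc n) ys = xs" using xs_eq[symmetric] by (rule trans)
  then show "xs \<in> (\<lambda>(ys, j). ins j (Suc n) ys) ` (PL n \<times> {0..n})"
    using ys j l by (auto intro!: image_eqI[where x="(ys, j)"])
next
  fix xs assume "xs \<in> (\<lambda>(ys, j). ins j (Suc n) ys) ` (PL n \<times> {0..n})"
  then show "xs \<in> PL (Suc n)" using ins_PL by auto
qed

lemma PL_Suc_inj: "inj_on (\<lambda>(ys, j). ins j (Suc n) ys) (PL n \<times> {0..n})"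
proof -
  have *: "ys = ys' \<and> j = j'" if a: "ys \<in> PL n" "j \<le> n" "ys' \<in> PL n" "j' \<le> n"
     "ins j (Suc n) ys = ins j' (Suc n) ys'" for ys j ys' j'
  proof -
    have "set ys = {1..n}" "set ys' = {1..n}" using a(1,3) by (auto dest: permutations_of_setD)
    then have n1: "Suc n \<notin> set ys" "Suc n \<notin> set ys'" by auto
    have l: "length ys = n" "length ys' = n" using PL_length a(1,3) by auto
    have j: "j \<le> length ys" "j' \<le> length ys'" using l a(2,4) by auto
    have "length ys = length ys'" using l by simp
    from ins_inj[OF n1 j this a(5)] show "ys = ys' \<and> j = j'" by simp
  qed
  show ?thesis
  proof (rule inj_onI)
    fix p p' assume p: "p \<in> PL n \<times> {0..n}" "p' \<in> PL n \<times> {0..n}"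
      "(\<lambda>(ys, j). ins j (Suc n) ys) p = (\<lambda>(ys, j). ins j (Suc n) ys) p'"
    obtain ys j ys' j' where pp: "p = (ys, j)" "p' = (ys', j')" by (cases p, cases p')
    show "p = p'" using p *[of ys j ys' j'] unfolding pp by simp
  qed
qed

lemma sum_PL_Suc:
  fixes g :: "nat list \<Rightarrow> real"
  shows "(\<Sum>xs\<in>PL (Suc n). g xs) = (\<Sum>ys\<in>PL n. \<Sum>j\<in>{0..n}. g (ins j (Suc n) ys))"
proof -
  have "(\<Sum>xs\<in>PL (Suc n). g xs) = sum (g \<circ> (\<lambda>(ys, j). ins j (Suc n) ys)) (PL n \<times> {0..n})"
    unfolding PL_Suc_image by (rule sum.reindex[OF PL_Suc_inj])
  also have "\<dots> = (\<Sum>(ys,j)\<in>PL n \<times> {0..n}. g (ins j (Suc n) ys))"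
    by (simp add: comp_def case_prod_beta)
  also have "\<dots> = (\<Sum>ys\<in>PL n. \<Sum>j\<in>{0..n}. g (ins j (Suc n) ys))"
    by (rule sum.cartesian_product[symmetric])
  finally show ?thesis .
qed



definition G :: "nat \<Rightarrow> nat \<Rightarrow> real" where
  "G n k = (-1)^k * Ccoef k (n div 2 - k)"

lemma slots_all:
  fixes f :: "nat \<Rightarrow> real"
  assumes ys: "ys \<in> PL n" and n: "n \<ge> 1"
  shows "(\<Sum>j\<in>{0..n}. f (card (pkset (ins j (Suc n) ys)))) =
     (2 * card (pkset ys) + 2) * f (card (pkset ys)) + (n + 1 - (2 * card (pkset ys) + 2)) * f (card (pkset ys) + 1)
     \<and> 2 * card (pkset ys) + 2 \<le> n + 1"
proof -
  have l: "length ys = n" using PL_length[OF ys] .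
  have N: "\<forall>x\<in>set ys. x < Suc n" using ys by (auto dest: permutations_of_setD)
  have S: "{0..n} \<subseteq> {0..length ys}" using l by simp
  have cb: "card ({0..n} \<inter> bad ys) = 2 * card (pkset ys) + 2" using card_bad_all[of ys] l n by simp
  have "card ({0..n} \<inter> bad ys) \<le> card {0..n}" by (rule card_mono) auto
  then have le: "2 * card (pkset ys) + 2 \<le> n + 1" using cb by simp
  show ?thesis using sum_slots[OF S N, of f] cb le by simp
qed

lemma step_all:
  assumes ys: "ys \<in> PL n" and n: "n \<ge> 1"
  shows "(\<Sum>j\<in>{0..n}. G (Suc n) (card (pkset (ins j (Suc n) ys)))) =
     (if even n then 1 else 4) * G n (card (pkset ys))"
proof -
  define k where "k = card (pkset ys)"
  have e: "(\<Sum>j\<in>{0..n}. G (Suc n) (card (pkset (ins j (Suc n) ys)))) =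
     (2 * k + 2) * G (Suc n) k + (n + 1 - (2 * k + 2)) * G (Suc n) (k + 1)"
   and le: "2 * k + 2 \<le> n + 1" using slots_all[OF ys n, of "G (Suc n)"] unfolding k_def by auto
  show ?thesis
  proof (cases "even n")
    case True
    then obtain j where j: "n = 2 * j" by auto
    define q where "q = j - k - 1"
    have kq: "j = k + q + 1" using le j unfolding q_def by simp
    have d: "Suc n div 2 = k + q + 1" "n div 2 = k + q + 1" using j kq by simp_all
    have m: "n + 1 - (2 * k + 2) = 2 * q + 1" using j kq by simp
    have hC: "real (2*k+1) * Ccoef k (q+1) = real (2*q+1) * Ccoef (k+1) q" using Codd[of k q] by (simp add: add.commute)
    
    have "(2 * k + 2) * G (Suc n) k + (n + 1 - (2 * k + 2)) * G (Suc n) (k + 1)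
        = (-1)^k * ((2*k+2) * Ccoef k (q+1) - (2*q+1) * Ccoef (k+1) q)"
      unfolding G_def d m by (simp add: algebra_simps Suc_diff_le)
    also have "\<dots> = (-1)^k * Ccoef k (q+1)"
      by (simp only: hC[symmetric]) (simp add: algebra_simps)
    also have "\<dots> = G n k" unfolding G_def d by (simp add: Suc_diff_le)
    finally show ?thesis using e True unfolding k_def by simp
  next
    case False
    then obtain i where i: "n = 2 * i + 1" using oddE by blast
    define q where "q = i - k"
    have kq: "i = k + q" using le i unfolding q_def by simp
    have d: "Suc n div 2 = k + q + 1" "n div 2 = k + q" using i kq by simp_all
    have m: "n + 1 - (2 * k + 2) = 2 * q" using i kq by simp
    have "(2 * k + 2) * G (Suc n) k + (n + 1 - (2 * k + 2)) * G (Suc n) (k + 1)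
        = (-1)^k * ((2*k+2) * Ccoef k (q+1) - (2*q) * Ccoef (k+1) q)"
      unfolding G_def d m by (simp add: algebra_simps Suc_diff_le)
    also have "\<dots> = (-1)^k * (4 * Ccoef k q)"
      using Ceven[of k q] by (simp add: add.commute)
    also have "\<dots> = 4 * G n k" unfolding G_def d by simp
    finally show ?thesis using e False unfolding k_def by simp
  qed
qed

lemma main_minus: "(\<Sum>xs\<in>PL n. G n (card (pkset xs))) = 4 ^ (n div 2)"
proof (induction n)
  case 0
  have "pkset [] = {}" unfolding pkset_def by simp
  then show ?case by (simp add: G_def Ccoef_def)
next
  case (Suc n)
  show ?case
  proof (cases "n = 0")
    case True
    have "PL 1 = {[1]}" by simp
    moreover have "pkset [1] = {}" unfolding pkset_def by simp
    ultimately show ?thesis using True by (simp add: G_def Ccoef_def)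
  next
    case False
    have "(\<Sum>xs\<in>PL (Suc n). G (Suc n) (card (pkset xs))) =
       (\<Sum>ys\<in>PL n. (if even n then 1 else 4) * G n (card (pkset ys)))"
      unfolding sum_PL_Suc using False by (intro sum.cong refl step_all) auto
    also have "\<dots> = (if even n then 1 else 4) * 4 ^ (n div 2)"
      using Suc.IH by (simp add: sum_distrib_left[symmetric])
    also have "\<dots> = 4 ^ (Suc n div 2)"
      by (cases "even n") (auto elim!: evenE oddE)
    finally show ?thesis .
  qed
qed

lemma ins_cons: "0 # ins j N ys = ins (Suc j) N (0 # ys)"
  unfolding ins_def by simp

lemma main_plus:
  assumes "odd m"
  shows "(\<Sum>xs\<in>PL (Suc m). G (Suc m) (card (pkset (0 # xs)))) = 0"
proof -
  have "(\<Sum>ys\<in>PL m. \<Sum>j\<in>{0..m}. G (Suc m) (card (pkset (0 # ins j (Suc m) ys)))) = 0"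
  proof (rule sum.neutral, rule ballI)
    fix ys assume ys: "ys \<in> PL m"
    let ?zs = "0 # ys"
    have l: "length ?zs = Suc m" using PL_length[OF ys] by simp
    have N: "\<forall>x\<in>set ?zs. x < Suc m" using ys by (auto dest: permutations_of_setD)
    define k where "k = card (pkset ?zs)"
    have "(\<Sum>j\<in>{0..m}. G (Suc m) (card (pkset (0 # ins j (Suc m) ys)))) =
          (\<Sum>j\<in>{0..m}. G (Suc m) (card (pkset (ins (Suc j) (Suc m) ?zs))))"
      by (simp add: ins_cons)
    also have "\<dots> = (\<Sum>j\<in>{1..Suc m}. G (Suc m) (card (pkset (ins j (Suc m) ?zs))))"
      using sum.shift_bounds_cl_Suc_ivl[of "\<lambda>j. G (Suc m) (card (pkset (ins j (Suc m) ?zs)))" 0 m]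
      by simp
    also have "\<dots> = card ({1..Suc m} \<inter> bad ?zs) * G (Suc m) k
         + (card {1..Suc m} - card ({1..Suc m} \<inter> bad ?zs)) * G (Suc m) (k + 1)"
      unfolding k_def using l by (intro sum_slots N) auto
    also have cb: "card ({1..Suc m} \<inter> bad ?zs) = 2 * k + 1"
      using card_bad_pos[of ?zs] l unfolding k_def by simp
    finally have e: "(\<Sum>j\<in>{0..m}. G (Suc m) (card (pkset (0 # ins j (Suc m) ys)))) =
        (2 * k + 1) * G (Suc m) k + (Suc m - (2 * k + 1)) * G (Suc m) (k + 1)" by simp
    have "card ({1..Suc m} \<inter> bad ?zs) \<le> card {1..Suc m}" by (rule card_mono) auto
    then have le: "2 * k + 1 \<le> Suc m" using cb by simp
    obtain i where i: "m = 2 * i + 1" using assms oddE by blast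
    define q where "q = i - k"
    have kq: "i = k + q" using le i unfolding q_def by simp
    have d: "Suc m div 2 = k + q + 1" using i kq by simp
    have mm: "Suc m - (2 * k + 1) = 2 * q + 1" using i kq by simp
    have hC: "real (2*k+1) * Ccoef k (q+1) = real (2*q+1) * Ccoef (k+1) q" using Codd[of k q] by (simp add: add.commute)
    
    have "(2 * k + 1) * G (Suc m) k + (Suc m - (2 * k + 1)) * G (Suc m) (k + 1)
        = (-1)^k * ((2*k+1) * Ccoef k (q+1) - (2*q+1) * Ccoef (k+1) q)"
      unfolding G_def d mm by (simp add: algebra_simps Suc_diff_le)
    also have "\<dots> = 0" by (simp only: hC) simp
    finally show "(\<Sum>j\<in>{0..m}. G (Suc m) (card (pkset (0 # ins j (Suc m) ys)))) = 0"
      using e by simp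
  qed
  then show ?thesis by (subst sum_PL_Suc)
qed



lemma perm_image: "(\<lambda>\<sigma>. map \<sigma> [1..<Suc n]) ` {\<sigma>. \<sigma> permutes {1..n}} = PL n"
proof (rule set_eqI, rule iffI)
  fix xs assume "xs \<in> (\<lambda>\<sigma>. map \<sigma> [1..<Suc n]) ` {\<sigma>. \<sigma> permutes {1..n}}"
  then obtain \<sigma> where s: "\<sigma> permutes {1..n}" and xs: "xs = map \<sigma> [1..<Suc n]" by auto
  have "inj_on \<sigma> {1..n}" using s permutes_inj_on by blast
  then have "distinct xs" unfolding xs by (simp add: distinct_map atLeastLessThanSuc_atLeastAtMost del: upt_Suc)
  moreover have "set xs = {1..n}" unfolding xs using permutes_image[OF s]
    by (simp add: atLeastLessThanSuc_atLeastAtMost del: upt_Suc)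
  ultimately show "xs \<in> PL n" by (auto intro!: permutations_of_setI)
next
  fix xs assume xs: "xs \<in> PL n"
  have l: "length xs = n" using PL_length[OF xs] .
  have sx: "set xs = {1..n}" "distinct xs" using xs by (auto dest: permutations_of_setD)
  define \<sigma> where "\<sigma> i = (if i \<in> {1..n} then xs ! (i - 1) else i)" for i
  have inj: "inj_on \<sigma> {1..n}"
  proof (rule inj_onI)
    fix a b assume ab: "a \<in> {1..n}" "b \<in> {1..n}" "\<sigma> a = \<sigma> b"
    then have "xs ! (a - 1) = xs ! (b - 1)" unfolding \<sigma>_def by simp
    then have "a - 1 = b - 1" using nth_eq_iff_index_eq[OF sx(2)] ab l by auto
    then show "a = b" using ab by auto
  qed
  have img: "\<sigma> ` {1..n} = {1..n}"
  proof -
    have "\<sigma> ` {1..n} = (\<lambda>i. xs ! i) ` {0..<n}"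
    proof (rule set_eqI, rule iffI)
      fix y assume "y \<in> \<sigma> ` {1..n}"
      then obtain a where "a \<in> {1..n}" "y = xs ! (a - 1)" unfolding \<sigma>_def by auto
      then show "y \<in> (\<lambda>i. xs ! i) ` {0..<n}" by (intro image_eqI[where x="a-1"]) auto
    next
      fix y assume "y \<in> (\<lambda>i. xs ! i) ` {0..<n}"
      then obtain a where "a < n" "y = xs ! a" by auto
      then show "y \<in> \<sigma> ` {1..n}" unfolding \<sigma>_def by (intro image_eqI[where x="Suc a"]) auto
    qed
    also have "\<dots> = set xs" using l by (auto simp: set_conv_nth)
    finally show ?thesis using sx by simp
  qed
  have "bij_betw \<sigma> {1..n} {1..n}" using inj img by (simp add: bij_betw_def)
  moreover have "\<And>x. x \<notin> {1..n} \<Longrightarrow> \<sigma> x = x" unfolding \<sigma>_def by auto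
  ultimately have "\<sigma> permutes {1..n}" by (rule bij_imp_permutes)
  moreover have "map \<sigma> [1..<Suc n] = xs"
    by (rule nth_equalityI) (auto simp: l \<sigma>_def nth_map_upt simp del: upt_Suc)
  ultimately show "xs \<in> (\<lambda>\<sigma>. map \<sigma> [1..<Suc n]) ` {\<sigma>. \<sigma> permutes {1..n}}" by force
qed

lemma perm_inj: "inj_on (\<lambda>\<sigma>. map \<sigma> [1..<Suc n]) {\<sigma>. \<sigma> permutes {1..n}}"
proof (rule inj_onI)
  fix \<sigma> \<tau> assume s: "\<sigma> \<in> {\<sigma>. \<sigma> permutes {1..n}}" "\<tau> \<in> {\<sigma>. \<sigma> permutes {1..n}}"
    and e: "map \<sigma> [1..<Suc n] = map \<tau> [1..<Suc n]"
  show "\<sigma> = \<tau>"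
  proof
    fix i show "\<sigma> i = \<tau> i"
    proof (cases "i \<in> {1..n}")
      case True
      then have "map \<sigma> [1..<Suc n] ! (i - 1) = \<sigma> i" "map \<tau> [1..<Suc n] ! (i - 1) = \<tau> i"
        by (auto simp: nth_map_upt simp del: upt_Suc)
      then show ?thesis using e by metis
    next
      case False
      then show ?thesis using s permutes_not_in by (metis mem_Collect_eq)
    qed
  qed
qed

lemma sum_perm:
  fixes g :: "nat list \<Rightarrow> real"
  shows "(\<Sum>\<sigma>\<in>{\<sigma>. \<sigma> permutes {1..n}}. g (map \<sigma> [1..<Suc n])) = (\<Sum>xs\<in>PL n. g xs)"
  using sum.reindex[OF perm_inj, of g, unfolded perm_image] by (simp add: comp_def)

lemma pkset_map_upt: "pkset (map \<sigma> [a..<b]) =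
  {i. 0 < i \<and> Suc i < b - a \<and> \<sigma> (a + (i - 1)) < \<sigma> (a + i) \<and> \<sigma> (a + Suc i) < \<sigma> (a + i)}"
  unfolding pkset_def by (auto simp: nth_map_upt)

lemma pm_eq: "peak_minus n \<sigma> = card (pkset (map \<sigma> [1..<Suc n]))"
proof -
  have "{i \<in> {2..n-1}. \<sigma> (i-1) < \<sigma> i \<and> \<sigma> i > \<sigma> (i+1)} = Suc ` pkset (map \<sigma> [1..<Suc n])"
    unfolding pkset_map_upt
  proof (rule set_eqI, rule iffI)
    fix x assume h: "x \<in> {i \<in> {2..n-1}. \<sigma> (i-1) < \<sigma> i \<and> \<sigma> i > \<sigma> (i+1)}"
    define y where "y = x - 2"
    have y: "x = Suc (Suc y)" using h unfolding y_def by auto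
    show "x \<in> Suc ` {i. 0 < i \<and> Suc i < Suc n - 1 \<and> \<sigma> (1 + (i - 1)) < \<sigma> (1 + i) \<and> \<sigma> (1 + Suc i) < \<sigma> (1 + i)}"
      using h unfolding y by (intro image_eqI[where x="Suc y"]) auto
  next
    fix x assume "x \<in> Suc ` {i. 0 < i \<and> Suc i < Suc n - 1 \<and> \<sigma> (1 + (i - 1)) < \<sigma> (1 + i) \<and> \<sigma> (1 + Suc i) < \<sigma> (1 + i)}"
    then show "x \<in> {i \<in> {2..n-1}. \<sigma> (i-1) < \<sigma> i \<and> \<sigma> i > \<sigma> (i+1)}" by auto
  qed
  then show ?thesis unfolding peak_minus_def by (simp add: card_image)
qed

lemma pp_eq: "\<sigma> 0 = 0 \<Longrightarrow> peak_plus n \<sigma> = card (pkset (0 # map \<sigma> [1..<Suc n]))"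
proof -
  assume s0: "\<sigma> 0 = 0"
  have "0 # map \<sigma> [1..<Suc n] = map \<sigma> [0..<Suc n]" using s0 by (simp add: upt_rec)
  moreover have "{i \<in> {1..n-1}. \<sigma> (i-1) < \<sigma> i \<and> \<sigma> i > \<sigma> (i+1)} = pkset (map \<sigma> [0..<Suc n])"
    unfolding pkset_map_upt by auto
  ultimately show ?thesis unfolding peak_plus_def by simp
qed

theorem corollary7p2:
  shows "(\<forall>n::nat. (\<Sum>\<sigma>\<in>{\<sigma>. \<sigma> permutes {1..n}}.
            (-1::real) ^ peak_minus n \<sigma> * Ccoef (peak_minus n \<sigma>) (n div 2 - peak_minus n \<sigma>))
          = 2 ^ (2 * (n div 2)))
       \<and> (\<forall>n::nat. even n \<and> 0 < n \<longrightarrow>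
          (\<Sum>\<sigma>\<in>{\<sigma>. \<sigma> permutes {1..n}}.
            (-1::real) ^ peak_plus n \<sigma> * Ccoef (peak_plus n \<sigma>) (n div 2 - peak_plus n \<sigma>)) = 0)"
proof (intro conjI allI impI)
  fix n :: nat
  have "(\<Sum>\<sigma>\<in>{\<sigma>. \<sigma> permutes {1..n}}.
            (-1::real) ^ peak_minus n \<sigma> * Ccoef (peak_minus n \<sigma>) (n div 2 - peak_minus n \<sigma>))
     = (\<Sum>\<sigma>\<in>{\<sigma>. \<sigma> permutes {1..n}}. G n (card (pkset (map \<sigma> [1..<Suc n]))))"
    by (rule sum.cong) (simp_all add: pm_eq G_def)
  also have "\<dots> = (\<Sum>xs\<in>PL n. G n (card (pkset xs)))" by (rule sum_perm)
  also have "\<dots> = 4 ^ (n div 2)" by (rule main_minus)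
  also have "\<dots> = 2 ^ (2 * (n div 2))" by (simp add: power_mult)
  finally show "(\<Sum>\<sigma>\<in>{\<sigma>. \<sigma> permutes {1..n}}.
            (-1::real) ^ peak_minus n \<sigma> * Ccoef (peak_minus n \<sigma>) (n div 2 - peak_minus n \<sigma>))
          = 2 ^ (2 * (n div 2))" .
next
  fix n :: nat assume h: "even n \<and> 0 < n"
  then obtain m where m: "n = Suc m" "odd m" by (cases n) auto
  have "(\<Sum>\<sigma>\<in>{\<sigma>. \<sigma> permutes {1..n}}.
            (-1::real) ^ peak_plus n \<sigma> * Ccoef (peak_plus n \<sigma>) (n div 2 - peak_plus n \<sigma>))
     = (\<Sum>\<sigma>\<in>{\<sigma>. \<sigma> permutes {1..n}}. G n (card (pkset (0 # map \<sigma> [1..<Suc n]))))"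
  proof (rule sum.cong)
    fix \<sigma> assume "\<sigma> \<in> {\<sigma>. \<sigma> permutes {1..n}}"
    then have "\<sigma> 0 = 0" using permutes_not_in by fastforce
    then show "(-1::real) ^ peak_plus n \<sigma> * Ccoef (peak_plus n \<sigma>) (n div 2 - peak_plus n \<sigma>)
        = G n (card (pkset (0 # map \<sigma> [1..<Suc n])))" by (simp add: pp_eq G_def)
  qed simp
  also have "\<dots> = (\<Sum>xs\<in>PL n. G n (card (pkset (0 # xs))))"
    by (rule sum_perm[where g = "\<lambda>xs. G n (card (pkset (0 # xs)))"])
  also have "\<dots> = 0" using main_plus[OF m(2)] m(1) by simp
  finally show "(\<Sum>\<sigma>\<in>{\<sigma>. \<sigma> permutes {1..n}}.
            (-1::real) ^ peak_plus n \<sigma> * Ccoef (peak_plus n \<sigma>) (n div 2 - peak_plus n \<sigma>)) = 0" .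
qed

end
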